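(* Let $\gamma\in[0,1]$, $\theta>0$, and let $\alpha,\beta_0,\beta$ be real numbers with $\alpha\ge-1$. Suppose $$\theta\ge\max\Big\{\beta,\ \frac{|\beta_0|\gamma+\beta}{1+\sqrt{1+\alpha}}\Big\}.$$ Then for all real $z_0,z_1,z_2$ satisfying $z_1\le0$, $z_2\le0$, $z_0+z_1+z_2\le0$ and $|z_0|\le2\gamma\sqrt{z_1z_2}$, one has $$p+\alpha+\beta_0z_0+\beta(z_1+z_2)\ge0,\qquad\text{where } p=(1-\theta z_1)(1-\theta z_2).$$ *)

theory Defs
  imports Complex_Main
begin

end

theory Submission
  imports Defs
begin

theorem lemma1:
  fixes \<gamma> \<theta> \<alpha> \<beta>\<^sub>0 \<beta> :: real
  assumes "0 \<le> \<gamma>" and "\<gamma> \<le> 1" and "\<theta> > 0" and "\<alpha> \<ge> -1"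
    and "\<theta> \<ge> max \<beta> ((\<bar>\<beta>\<^sub>0\<bar> * \<gamma> + \<beta>) / (1 + sqrt (1 + \<alpha>)))"
  shows "\<forall>z0 z1 z2 :: real. z1 \<le> 0 \<longrightarrow> z2 \<le> 0 \<longrightarrow> z0 + z1 + z2 \<le> 0 \<longrightarrow>
           \<bar>z0\<bar> \<le> 2 * \<gamma> * sqrt (z1 * z2) \<longrightarrow>
           (let p = (1 - \<theta> * z1) * (1 - \<theta> * z2) in p + \<alpha> + \<beta>\<^sub>0 * z0 + \<beta> * (z1 + z2) \<ge> 0)"
proof (intro allI impI)
  fix z0 z1 z2 :: real
  assume h1: "z1 \<le> 0" and h2: "z2 \<le> 0" and h0: "z0 + z1 + z2 \<le> 0"
    and hz: "\<bar>z0\<bar> \<le> 2 * \<gamma> * sqrt (z1 * z2)"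
  define a where "a = - z1"
  define b where "b = - z2"
  define s where "s = sqrt (z1 * z2)"
  define r where "r = sqrt (1 + \<alpha>)"
  define c where "c = \<bar>\<beta>\<^sub>0\<bar> * \<gamma> + \<beta>"
  have a0: "a \<ge> 0" "b \<ge> 0" using h1 h2 by (auto simp: a_def b_def)
  have s0: "s \<ge> 0" using mult_nonpos_nonpos[OF h1 h2] by (simp add: s_def)
  have zz: "0 \<le> z1 * z2" using mult_nonpos_nonpos[OF h1 h2] .
  have ss: "s * s = a * b" unfolding s_def a_def b_def
    using zz by simp
  have r0: "r \<ge> 0" and rr: "r * r = 1 + \<alpha>" using assms(4) by (auto simp: r_def)
  have ab: "a + b \<ge> 2 * s"
  proof -
    have "(a + b)^2 - (2*s)^2 = (a - b)^2" using ss by (simp add: power2_eq_square algebra_simps)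
    hence "(2*s)^2 \<le> (a+b)^2" by (smt (verit) zero_le_power2)
    thus ?thesis by (rule power2_le_imp_le) (use a0 in linarith)
  qed
  have tb: "\<theta> \<ge> \<beta>" using assms(5) by simp
  have tc: "c \<le> \<theta> * (1 + r)"
    using assms(5) r0 by (simp add: c_def r_def pos_divide_le_eq add_pos_nonneg)
  have bz: "\<beta>\<^sub>0 * z0 \<ge> - (\<bar>\<beta>\<^sub>0\<bar> * \<gamma>) * 2 * s"
  proof -
    have "\<bar>\<beta>\<^sub>0 * z0\<bar> \<le> \<bar>\<beta>\<^sub>0\<bar> * (2 * \<gamma> * s)"
      unfolding abs_mult s_def by (rule mult_left_mono[OF hz]) simp
    moreover have "- (\<beta>\<^sub>0 * z0) \<le> \<bar>\<beta>\<^sub>0 * z0\<bar>" by simp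
    moreover have "\<bar>\<beta>\<^sub>0\<bar> * (2 * \<gamma> * s) = (\<bar>\<beta>\<^sub>0\<bar> * \<gamma>) * 2 * s" by (simp only: mult_ac)
    moreover have "- (\<bar>\<beta>\<^sub>0\<bar> * \<gamma>) * 2 * s = - ((\<bar>\<beta>\<^sub>0\<bar> * \<gamma>) * 2 * s)" by simp
    ultimately show ?thesis by linarith
  qed
  have lhs: "(1 - \<theta> * z1) * (1 - \<theta> * z2) + \<alpha> + \<beta>\<^sub>0 * z0 + \<beta> * (z1 + z2)
      = 1 + \<alpha> + (\<theta> - \<beta>) * (a + b) + \<theta>^2 * (a * b) + \<beta>\<^sub>0 * z0"
    unfolding a_def b_def by (simp add: power2_eq_square algebra_simps)
  have k1: "(\<theta> - \<beta>) * (a + b) \<ge> (\<theta> - \<beta>) * (2 * s)"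
    using ab tb by (simp add: mult_left_mono)
  have k2: "(c - \<theta>) * s \<le> \<theta> * r * s"
  proof -
    have "(c - \<theta>) * s \<le> (\<theta> * r) * s" using tc s0 by (intro mult_right_mono) (auto simp: algebra_simps)
    thus ?thesis by simp
  qed
  have sq: "(\<theta> * s - r)^2 \<ge> 0" by simp
  have e1: "(\<bar>\<beta>\<^sub>0\<bar> * \<gamma>) * 2 * s = 2 * (c - \<beta>) * s" by (simp add: c_def)
  have "1 + \<alpha> + (\<theta> - \<beta>) * (a + b) + \<theta>^2 * (a * b) + \<beta>\<^sub>0 * z0
      \<ge> r*r + \<theta>^2 * (s*s) - 2 * (c - \<theta>) * s"
  proof -
    have "(\<theta> - \<beta>) * (2 * s) - 2 * (c - \<beta>) * s = - (2 * (c - \<theta>) * s)" by (simp add: algebra_simps)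
    moreover have "- (\<bar>\<beta>\<^sub>0\<bar> * \<gamma> * 2 * s) \<le> \<beta>\<^sub>0 * z0" using bz by simp
    ultimately show ?thesis unfolding ss using k1 rr e1 by linarith
  qed
  moreover have "r*r + \<theta>^2 * (s*s) - 2 * (c - \<theta>) * s \<ge> (\<theta> * s - r)^2"
  proof -
    have "(\<theta> * s - r)^2 = r*r + \<theta>^2 * (s*s) - 2 * (\<theta> * r * s)" by (simp add: power2_eq_square algebra_simps)
    thus ?thesis using k2 by linarith
  qed
  ultimately show "let p = (1 - \<theta> * z1) * (1 - \<theta> * z2) in p + \<alpha> + \<beta>\<^sub>0 * z0 + \<beta> * (z1 + z2) \<ge> 0"
    unfolding Let_def using lhs sq by linarith
qed

end
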